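(* For integers $r\le s<0$, the universal algebraic prolongation of $\mathbb K\delta_{rs}$ in $\mathfrak{gl}(V_{rs})$ is isomorphic to $\mathfrak{gl}_2$; its largest ideal contained in the nonnegative-degree part is $\mathbb K\,\mathrm{Id}$.
   Context: $V_{rs}=\bigoplus_{i=r}^sE_i$ with $\dim E_i=1$ in degree $i$; $\delta_{rs}$ maps $E_i$ onto $E_{i-1}$ for $r<i\le s$ and $E_r$ to $0$. $\mathfrak{gl}(V_{rs})$ is graded by $\mathfrak{gl}(V)_k=\bigoplus_i\operatorname{Hom}(E_i,E_{i+k})$. Universal algebraic prolongation of a line $\mathfrak m\subset\mathfrak g_{-1}$: $\mathfrak u_{-1}=\mathfrak m$, $\mathfrak u_k=\{X\in\mathfrak g_k:[X,\delta]\in\mathfrak u_{k-1}\ \forall\delta\in\mathfrak m\}$ ($k\ge0$), $\mathfrak u(\mathfrak m)=\bigoplus_{k\ge-1}\mathfrak u_k$. *)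

theory Defs
  imports "HOL-Analysis.Analysis"
begin

text \<open>
  Conventions. \<open>V_rs\<close> has the basis \<open>e_r, ..., e_s\<close> with \<open>e_i\<close> spanning \<open>E_i\<close> (degree \<open>i\<close>),
  the basis being chosen so that \<open>\<delta>_rs e_i = e_(i-1)\<close> for \<open>r < i \<le> s\<close> and \<open>\<delta>_rs e_r = 0\<close>.
  An endomorphism of \<open>V_rs\<close> is represented by its matrix \<open>A :: int \<Rightarrow> int \<Rightarrow> 'a\<close>,
  where \<open>A i j\<close> is the coefficient of \<open>e_i\<close> in \<open>A e_j\<close>; entries outside \<open>[r,s]\<^sup>2\<close> vanish.
\<close>

type_synonym 'a endo = "int \<Rightarrow> int \<Rightarrow> 'a"

definition gl :: "int \<Rightarrow> int \<Rightarrow> 'a::field endo set" where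
  "gl r s = {A. \<forall>i j. A i j \<noteq> 0 \<longrightarrow> r \<le> i \<and> i \<le> s \<and> r \<le> j \<and> j \<le> s}"

definition madd :: "'a::field endo \<Rightarrow> 'a endo \<Rightarrow> 'a endo" where
  "madd A B = (\<lambda>i j. A i j + B i j)"

definition msmult :: "'a::field \<Rightarrow> 'a endo \<Rightarrow> 'a endo" where
  "msmult c A = (\<lambda>i j. c * A i j)"

definition mzero :: "'a::field endo" where
  "mzero = (\<lambda>i j. 0)"

definition mmul :: "int \<Rightarrow> int \<Rightarrow> 'a::field endo \<Rightarrow> 'a endo \<Rightarrow> 'a endo" where
  "mmul r s A B = (\<lambda>i j. \<Sum>k\<in>{r..s}. A i k * B k j)"

definition bracket :: "int \<Rightarrow> int \<Rightarrow> 'a::field endo \<Rightarrow> 'a endo \<Rightarrow> 'a endo" where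
  "bracket r s A B = (\<lambda>i j. mmul r s A B i j - mmul r s B A i j)"

definition idV :: "int \<Rightarrow> int \<Rightarrow> 'a::field endo" where
  "idV r s = (\<lambda>i j. if i = j \<and> r \<le> i \<and> i \<le> s then 1 else 0)"

definition delta :: "int \<Rightarrow> int \<Rightarrow> 'a::field endo" where
  "delta r s = (\<lambda>i j. if r < j \<and> j \<le> s \<and> i = j - 1 then 1 else 0)"

definition gl_deg :: "int \<Rightarrow> int \<Rightarrow> int \<Rightarrow> 'a::field endo set" where
  "gl_deg r s k = {A \<in> gl r s. \<forall>i j. A i j \<noteq> 0 \<longrightarrow> i - j = k}"

definition deg_part :: "int \<Rightarrow> 'a::field endo \<Rightarrow> 'a endo" where
  "deg_part k A = (\<lambda>i j. if i - j = k then A i j else 0)"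

definition line :: "'a::field endo \<Rightarrow> 'a endo set" where
  "line d = {msmult c d | c. True}"

text \<open>Universal algebraic prolongation of \<open>\<mathfrak>m \<subseteq> gl(V)_(-1)\<close>:
  \<open>prol_step r s m n = \<mathfrak>u_(n-1)\<close>.\<close>
fun prol_step :: "int \<Rightarrow> int \<Rightarrow> 'a::field endo set \<Rightarrow> nat \<Rightarrow> 'a endo set" where
  "prol_step r s m 0 = m"
| "prol_step r s m (Suc n) =
     {X \<in> gl_deg r s (int n). \<forall>d\<in>m. bracket r s X d \<in> prol_step r s m n}"

definition prol_deg :: "int \<Rightarrow> int \<Rightarrow> 'a::field endo set \<Rightarrow> int \<Rightarrow> 'a endo set" where
  "prol_deg r s m k = (if k < -1 then {mzero} else prol_step r s m (nat (k + 1)))"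

definition prolongation :: "int \<Rightarrow> int \<Rightarrow> 'a::field endo set \<Rightarrow> 'a endo set" where
  "prolongation r s m = {A \<in> gl r s. \<forall>k. deg_part k A \<in> prol_deg r s m k}"

definition prolongation_nonneg :: "int \<Rightarrow> int \<Rightarrow> 'a::field endo set \<Rightarrow> 'a endo set" where
  "prolongation_nonneg r s m = {A \<in> prolongation r s m. deg_part (-1) A = mzero}"

definition is_subspace :: "'a::field endo set \<Rightarrow> bool" where
  "is_subspace S \<longleftrightarrow> mzero \<in> S \<and> (\<forall>A\<in>S. \<forall>B\<in>S. madd A B \<in> S) \<and> (\<forall>c. \<forall>A\<in>S. msmult c A \<in> S)"

definition is_lie_ideal :: "int \<Rightarrow> int \<Rightarrow> 'a::field endo set \<Rightarrow> 'a endo set \<Rightarrow> bool" where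
  "is_lie_ideal r s L I \<longleftrightarrow> is_subspace I \<and> I \<subseteq> L \<and> (\<forall>A\<in>L. \<forall>X\<in>I. bracket r s A X \<in> I)"

definition bracket2 :: "'a::field^2^2 \<Rightarrow> 'a^2^2 \<Rightarrow> 'a^2^2" where
  "bracket2 A B = A ** B - B ** A"

definition lie_iso_gl2 :: "int \<Rightarrow> int \<Rightarrow> 'a::field endo set \<Rightarrow> ('a endo \<Rightarrow> 'a^2^2) \<Rightarrow> bool" where
  "lie_iso_gl2 r s L \<phi> \<longleftrightarrow>
     bij_betw \<phi> L UNIV \<and>
     (\<forall>A\<in>L. \<forall>B\<in>L. \<phi> (madd A B) = \<phi> A + \<phi> B) \<and>
     (\<forall>c. \<forall>A\<in>L. \<phi> (msmult c A) = (\<chi> i j. c * \<phi> A $ i $ j)) \<and>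
     (\<forall>A\<in>L. \<forall>B\<in>L. \<phi> (bracket r s A B) = bracket2 (\<phi> A) (\<phi> B))"

end

theory Submission
  imports Defs
begin


definition diag :: "int \<Rightarrow> int \<Rightarrow> (int \<Rightarrow> 'a::field) \<Rightarrow> 'a endo" where
  "diag r s d = (\<lambda>i j. if i = j \<and> r \<le> i \<and> i \<le> s then d i else 0)"

definition hh :: "int \<Rightarrow> int \<Rightarrow> 'a::field endo" where
  "hh r s = diag r s (\<lambda>i. of_int (2*i - r - s))"

definition ee :: "int \<Rightarrow> int \<Rightarrow> 'a::field endo" where
  "ee r s = (\<lambda>i j. if i = j + 1 \<and> r \<le> j \<and> j < s then of_int ((j - r + 1) * (s - j)) else 0)"

lemma idV_diag: "idV r s = diag r s (\<lambda>_. 1)"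
  by (auto simp: idV_def diag_def fun_eq_iff)

lemma mmul_left_single:
  assumes "\<And>k. A i k = (if k = a then w else 0)"
  shows "mmul r s A B i j = (if r \<le> a \<and> a \<le> s then w * B a j else 0)"
proof -
  have "mmul r s A B i j = (\<Sum>k\<in>{r..s}. if k = a then w * B a j else 0)"
    unfolding mmul_def assms by (rule sum.cong) auto
  then show ?thesis by (simp add: sum.delta')
qed

lemma mmul_right_single:
  assumes "\<And>k. B k j = (if k = a then w else 0)"
  shows "mmul r s A B i j = (if r \<le> a \<and> a \<le> s then A i a * w else 0)"
proof -
  have "mmul r s A B i j = (\<Sum>k\<in>{r..s}. if k = a then A i a * w else 0)"
    unfolding mmul_def assms by (rule sum.cong) auto
  then show ?thesis by (simp add: sum.delta')
qed

lemma mmul_diag_left: "mmul r s (diag r s d) A i j = (if r \<le> i \<and> i \<le> s then d i * A i j else 0)"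
  by (subst mmul_left_single[where a=i and w="if r \<le> i \<and> i \<le> s then d i else 0"]) (auto simp: diag_def)

lemma mmul_diag_right: "mmul r s A (diag r s d) i j = (if r \<le> j \<and> j \<le> s then A i j * d j else 0)"
  by (subst mmul_right_single[where a=j and w="if r \<le> j \<and> j \<le> s then d j else 0"]) (auto simp: diag_def)

lemma mmul_delta_right: "mmul r s A (delta r s) i j = (if r < j \<and> j \<le> s then A i (j-1) else 0)"
  by (subst mmul_right_single[where a="j-1" and w="if r < j \<and> j \<le> s then 1 else 0"]) (auto simp: delta_def)

lemma mmul_delta_left: "mmul r s (delta r s) A i j = (if r < i+1 \<and> i+1 \<le> s then A (i+1) j else 0)"
  by (subst mmul_left_single[where a="i+1" and w="if r < i+1 \<and> i+1 \<le> s then 1 else 0"]) (auto simp: delta_def)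

lemma mmul_ee_left: "mmul r s (ee r s) A i j = (if r \<le> i - 1 \<and> i - 1 < s then of_int ((i - 1 - r + 1) * (s - (i - 1))) * A (i-1) j else 0)"
  by (subst mmul_left_single[where a="i-1" and w="if r \<le> i - 1 \<and> i - 1 < s then of_int ((i - 1 - r + 1) * (s - (i - 1))) else 0"]) (auto simp: ee_def)

lemma mmul_ee_right: "mmul r s A (ee r s) i j = (if r \<le> j \<and> j < s then A i (j+1) * of_int ((j - r + 1) * (s - j)) else 0)"
  by (subst mmul_right_single[where a="j+1" and w="if r \<le> j \<and> j < s then of_int ((j - r + 1) * (s - j)) else 0"]) (auto simp: ee_def)

lemma bracket_delta: "bracket r s X (delta r s) i j = (if r < j \<and> j \<le> s then X i (j-1) else 0) - (if r < i+1 \<and> i+1 \<le> s then X (i+1) j else 0)"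
  by (simp add: bracket_def mmul_delta_left mmul_delta_right)


lemma mmul_madd_left: "mmul r s (madd A B) C = madd (mmul r s A C) (mmul r s B C)"
  by (simp add: mmul_def madd_def fun_eq_iff distrib_right sum.distrib)
lemma mmul_madd_right: "mmul r s C (madd A B) = madd (mmul r s C A) (mmul r s C B)"
  by (simp add: mmul_def madd_def fun_eq_iff distrib_left sum.distrib)
lemma mmul_smult_left: "mmul r s (msmult c A) C = msmult c (mmul r s A C)"
  by (simp add: mmul_def msmult_def fun_eq_iff sum_distrib_left mult.assoc)
lemma mmul_smult_right: "mmul r s C (msmult c A) = msmult c (mmul r s C A)"
  by (simp add: mmul_def msmult_def fun_eq_iff sum_distrib_left algebra_simps)

lemma bracket_madd_left: "bracket r s (madd A B) C = madd (bracket r s A C) (bracket r s B C)"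
  unfolding bracket_def mmul_madd_left mmul_madd_right by (simp add: fun_eq_iff madd_def)
lemma bracket_madd_right: "bracket r s C (madd A B) = madd (bracket r s C A) (bracket r s C B)"
  unfolding bracket_def mmul_madd_left mmul_madd_right by (simp add: fun_eq_iff madd_def)
lemma bracket_smult_left: "bracket r s (msmult c A) C = msmult c (bracket r s A C)"
  unfolding bracket_def mmul_smult_left mmul_smult_right by (simp add: fun_eq_iff msmult_def algebra_simps)
lemma bracket_smult_right: "bracket r s C (msmult c A) = msmult c (bracket r s C A)"
  unfolding bracket_def mmul_smult_left mmul_smult_right by (simp add: fun_eq_iff msmult_def algebra_simps)
lemma bracket_antisym: "bracket r s A B = msmult (-1) (bracket r s B A)"
  by (simp add: bracket_def fun_eq_iff msmult_def)
lemma bracket_self: "bracket r s A A = mzero"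
  by (simp add: bracket_def fun_eq_iff mzero_def)

lemma bracket_id: "A \<in> gl r s \<Longrightarrow> bracket r s (idV r s) A = mzero"
  unfolding idV_diag by (auto simp: bracket_def fun_eq_iff mzero_def mmul_diag_left mmul_diag_right gl_def)

lemma bracket_hh_delta: "bracket r s (hh r s) (delta r s) = msmult (-2) (delta r s)"
  apply (rule ext, rule ext)
  apply (subst bracket_delta)
  by (auto simp: msmult_def hh_def diag_def delta_def)

lemma bracket_hh_ee: "bracket r s (hh r s) (ee r s) = msmult 2 (ee r s)"
  by (auto simp: bracket_def hh_def mmul_diag_left mmul_diag_right fun_eq_iff msmult_def ee_def algebra_simps)

lemma int_id1: "(j - 1 - r + 1) * (s - (j - 1)) - (j - r + 1) * (s - j) = 2 * j - r - (s::int)"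
  by (simp add: algebra_simps)

lemma bracket_ee_delta:
  assumes "r < s"
  shows "bracket r s (ee r s) (delta r s) = (hh r s :: 'a::field endo)"
proof (rule ext, rule ext)
  fix i j
  show "bracket r s (ee r s) (delta r s) i j = (hh r s :: 'a::field endo) i j"
  proof (cases "i = j \<and> r \<le> j \<and> j \<le> s")
    case True
    then have ij: "i = j" "r \<le> j" "j \<le> s" by auto
    consider "j = r" | "j = s" | "r < j" "j < s" using ij by linarith
    then show ?thesis
    proof cases
      case 1 then show ?thesis using ij assms by (simp add: bracket_delta ee_def hh_def diag_def algebra_simps)
    next
      case 2 then show ?thesis using ij assms by (simp add: bracket_delta ee_def hh_def diag_def algebra_simps)
    next
      case 3
      have "(of_int ((j - 1 - r + 1) * (s - (j - 1))) :: 'a) - of_int ((j - r + 1) * (s - j)) = of_int (2 * j - r - s)"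
        by (simp only: of_int_diff[symmetric] int_id1)
      then show ?thesis using ij 3 by (simp add: bracket_delta ee_def hh_def diag_def)
    qed
  next
    case False
    then show ?thesis by (auto simp: bracket_delta ee_def hh_def diag_def)
  qed
qed


lemma idV_gl: "idV r s \<in> gl r s" by (simp add: gl_def idV_def)
lemma hh_gl: "hh r s \<in> gl r s" by (simp add: gl_def hh_def diag_def)
lemma ee_gl: "ee r s \<in> gl r s" by (simp add: gl_def ee_def)
lemma delta_gl: "delta r s \<in> gl r s" by (simp add: gl_def delta_def)

lemma bracket_X_id: "A \<in> gl r s \<Longrightarrow> bracket r s A (idV r s) = mzero"
  by (subst bracket_antisym) (simp add: bracket_id msmult_def mzero_def)

lemma bracket_delta_hh: "bracket r s (delta r s) (hh r s) = msmult 2 (delta r s)"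
  by (subst bracket_antisym) (simp add: bracket_hh_delta msmult_def)
lemma bracket_ee_hh: "bracket r s (ee r s) (hh r s) = msmult (-2) (ee r s)"
  by (subst bracket_antisym) (simp add: bracket_hh_ee msmult_def)
lemma bracket_delta_ee: "r < s \<Longrightarrow> bracket r s (delta r s) (ee r s) = msmult (-1) (hh r s :: 'a::field endo)"
  by (subst bracket_antisym) (simp add: bracket_ee_delta)

definition lin :: "int \<Rightarrow> int \<Rightarrow> 'a::field \<Rightarrow> 'a \<Rightarrow> 'a \<Rightarrow> 'a \<Rightarrow> 'a endo" where
  "lin r s x y b c = madd (madd (msmult x (idV r s)) (msmult y (hh r s))) (madd (msmult b (ee r s)) (msmult c (delta r s)))"

lemma bracket_lin:
  assumes "r < s"
  shows "bracket r s (lin r s x y b c) (lin r s x' y' b' c') =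
     lin r s 0 (b*c' - c*b') (2*(y*b' - b*y')) (2*(c*y' - y*c'))"
  unfolding lin_def bracket_madd_left bracket_madd_right bracket_smult_left bracket_smult_right
    bracket_id[OF idV_gl] bracket_id[OF hh_gl] bracket_id[OF ee_gl] bracket_id[OF delta_gl]
    bracket_X_id[OF hh_gl] bracket_X_id[OF ee_gl] bracket_X_id[OF delta_gl] bracket_self
    bracket_delta_hh bracket_ee_hh bracket_delta_ee[OF assms] bracket_hh_delta bracket_hh_ee bracket_ee_delta[OF assms]
  by (simp add: fun_eq_iff madd_def msmult_def mzero_def algebra_simps)


definition mat4 :: "'a::field \<Rightarrow> 'a \<Rightarrow> 'a \<Rightarrow> 'a \<Rightarrow> 'a^2^2" where
  "mat4 x y b c = (\<chi> i j. if i = 1 then (if j = 1 then x + y else b) else (if j = 1 then c else x - y))"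

lemma mat4_nth [simp]:
  "mat4 x y b c $ 1 $ 1 = x + y" "mat4 x y b c $ 1 $ 2 = b"
  "mat4 x y b c $ 2 $ 1 = c" "mat4 x y b c $ 2 $ 2 = x - y"
  by (simp_all add: mat4_def)

lemma mat4_eq_iff: "(mat4 x y b c = (mat4 x' y' b' c' :: 'a::field_char_0^2^2)) \<longleftrightarrow> x = x' \<and> y = y' \<and> b = b' \<and> c = c'"
proof
  assume h: "mat4 x y b c = (mat4 x' y' b' c' :: 'a::field_char_0^2^2)"
  have e1: "x + y = x' + y'" using arg_cong[OF h, of "\<lambda>M. M $ 1 $ 1"] by simp
  have e2: "x - y = x' - y'" using arg_cong[OF h, of "\<lambda>M. M $ 2 $ 2"] by simp
  have "b = b'" using arg_cong[OF h, of "\<lambda>M. M $ 1 $ 2"] by simp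
  moreover have "c = c'" using arg_cong[OF h, of "\<lambda>M. M $ 2 $ 1"] by simp
  moreover have "(x + y) + (x - y) = (x' + y') + (x' - y')" using e1 e2 by simp
  then have "2 * x = 2 * x'" by (simp add: algebra_simps mult_2)
  then have "x = x'" by simp
  moreover have "y = y'" using e1 \<open>x = x'\<close> by simp
  ultimately show "x = x' \<and> y = y' \<and> b = b' \<and> c = c'" by simp
qed simp

lemma mat4_surj: "(M::'a::field_char_0^2^2) = mat4 ((M$1$1 + M$2$2)/2) ((M$1$1 - M$2$2)/2) (M$1$2) (M$2$1)"
  unfolding vec_eq_iff forall_2 by (simp add: field_simps)

lemma mat4_add: "mat4 x y b c + mat4 x' y' b' c' = mat4 (x+x') (y+y') (b+b') (c+c')"
  unfolding vec_eq_iff forall_2 by (simp add: algebra_simps)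

lemma mat4_scale: "(\<chi> i j. k * mat4 x y b c $ i $ j) = mat4 (k*x) (k*y) (k*b) (k*c)"
  unfolding vec_eq_iff forall_2 by (simp add: algebra_simps)

lemma bracket2_mat4:
  "bracket2 (mat4 x y b c) (mat4 x' y' b' c') =
     mat4 0 (b*c' - c*b') (2*(y*b' - b*y')) (2*(c*y' - y*c'))"
  unfolding vec_eq_iff forall_2 bracket2_def
  apply (simp add: matrix_matrix_mult_def sum_2)
  apply (simp add: algebra_simps)
  done

definition phi :: "int \<Rightarrow> int \<Rightarrow> 'a::field endo \<Rightarrow> 'a^2^2" where
  "phi r s A = mat4 ((A r r + A s s)/2) ((A s s - A r r)/(2 * of_int (s-r))) (A (r+1) r / of_int (s-r)) (A r (r+1))"

lemma lin_entries:
  assumes "r < s"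
  shows "lin r s x y b c r r = x + y * of_int (r - s)"
    "lin r s x y b c s s = x + y * of_int (s - r)"
    "lin r s x y b c (r+1) r = b * of_int (s - r)"
    "lin r s x y b c r (r+1) = c"
  using assms by (auto simp: lin_def madd_def msmult_def idV_def hh_def diag_def ee_def delta_def algebra_simps)

lemma phi_lin:
  assumes "r < s"
  shows "phi r s (lin r s x y b c) = (mat4 x y b c :: 'a::field_char_0^2^2)"
proof -
  have d: "(of_int (s - r) :: 'a) \<noteq> 0" using assms by simp
  have n: "(of_int (r - s) :: 'a) = - of_int (s - r)" by (simp add: of_int_diff)
  show ?thesis unfolding phi_def lin_entries[OF assms] mat4_eq_iff n
    using d by (simp add: field_simps)
qed

lemma phi_madd: "phi r s (madd A B) = phi r s A + phi r s (B::'a::field_char_0 endo)"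
  unfolding phi_def mat4_add mat4_eq_iff by (simp add: madd_def add_divide_distrib diff_divide_distrib algebra_simps)

lemma phi_msmult: "phi r s (msmult k A) = (\<chi> i j. k * phi r s A $ i $ j)"
  unfolding phi_def mat4_scale by (simp add: msmult_def algebra_simps)



lemma gl_zero: "A \<in> gl r s \<Longrightarrow> \<not> (r \<le> i \<and> i \<le> s \<and> r \<le> j \<and> j \<le> s) \<Longrightarrow> A i j = 0"
  unfolding gl_def by blast
lemma delta_line: "delta r s \<in> line (delta r s)"
  unfolding line_def by (rule CollectI, rule exI[of _ 1]) (simp add: msmult_def)

lemma C1:
  fixes X :: "'a::field_char_0 endo"
  assumes X: "X \<in> prol_step r s (line (delta r s)) (Suc 0)"
  shows "\<exists>x y. X = madd (msmult x (idV r s)) (msmult y (hh r s))"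
proof -
  have Xg: "X \<in> gl_deg r s 0" and Xb: "bracket r s X (delta r s) \<in> line (delta r s)"
    using X delta_line by auto
  obtain c where c: "bracket r s X (delta r s) = msmult c (delta r s)"
    using Xb unfolding line_def by auto
  have stp: "X (j-1) (j-1) - X j j = c" if "r < j" "j \<le> s" for j
  proof -
    have "bracket r s X (delta r s) (j-1) j = msmult c (delta r s) (j-1) j" by (simp add: c)
    then show ?thesis using that by (simp only: bracket_delta, simp add: msmult_def delta_def)
  qed
  have diag: "j \<le> s \<longrightarrow> X j j = X r r - c * of_int (j - r)" if "r \<le> j" for j
    using that
  proof (induction j rule: int_ge_induct)
    case base then show ?case by simp
  next
    case (step i)
    show ?case
    proof
      assume "i + 1 \<le> s"
      then have "X i i - X (i+1) (i+1) = c" using step.hyps stp[of "i+1"] by simp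
      then show "X (i + 1) (i + 1) = X r r - c * of_int (i + 1 - r)"
        using step.IH \<open>i + 1 \<le> s\<close> by (simp add: algebra_simps)
    qed
  qed
  define y where "y = - c / 2"
  define x where "x = X r r + c * of_int (r - s) / 2"
  have "X = madd (msmult x (idV r s)) (msmult y (hh r s))"
  proof (rule ext, rule ext)
    fix i j
    show "X i j = madd (msmult x (idV r s)) (msmult y (hh r s)) i j"
    proof (cases "i = j \<and> r \<le> j \<and> j \<le> s")
      case True
      then have "X i j = X r r - c * of_int (j - r)" using diag[of j] by auto
      moreover have "madd (msmult x (idV r s)) (msmult y (hh r s)) i j = x + y * of_int (2*j - r - s)"
        using True by (simp add: madd_def msmult_def idV_def hh_def diag_def)
      moreover have "X r r - c * of_int (j - r) = x + y * of_int (2*j - r - s)"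
        unfolding x_def y_def of_int_diff of_int_mult by (simp add: field_simps)
      ultimately show ?thesis by simp
    next
      case False
      have "X i j = 0"
      proof (cases "i = j")
        case True then show ?thesis using False Xg gl_zero[of X r s i j] unfolding gl_deg_def by auto
      next
        case F: False then show ?thesis using Xg unfolding gl_deg_def by auto
      qed
      then show ?thesis using False by (auto simp: madd_def msmult_def idV_def hh_def diag_def)
    qed
  qed
  then show ?thesis by blast
qed

lemma bracket_mzero_left: "bracket r s mzero A = mzero"
  by (simp add: bracket_def mmul_def mzero_def fun_eq_iff)

lemma mzero_prol: "mzero \<in> prol_step r s (line (delta r s)) n"
proof (induction n)
  case 0
  have "mzero = msmult 0 (delta r s)" by (simp add: mzero_def msmult_def fun_eq_iff)
  then show ?case unfolding line_def by auto
next
  case (Suc n)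
  then show ?case by (simp add: bracket_mzero_left, simp add: gl_deg_def gl_def mzero_def)
qed
lemma C2:
  fixes X :: "'a::field_char_0 endo"
  assumes rs: "r < s" and X: "X \<in> prol_step r s (line (delta r s)) (Suc (Suc 0))"
  shows "\<exists>b. X = msmult b (ee r s)"
proof -
  have Xg: "X \<in> gl_deg r s 1" and Xb: "bracket r s X (delta r s) \<in> prol_step r s (line (delta r s)) (Suc 0)"
    using X delta_line by auto
  have Xgl: "X \<in> gl r s" using Xg unfolding gl_deg_def by auto
  obtain x y where xy: "bracket r s X (delta r s) = madd (msmult x (idV r s)) (msmult y (hh r s))"
    using C1[OF Xb] by blast
  define z where "z j = X (j+1) j" for j
  have stp: "z (i-1) - z i = x + y * of_int (2*i - r - s)" if "r \<le> i" "i \<le> s" for i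
  proof -
    have "bracket r s X (delta r s) i i = madd (msmult x (idV r s)) (msmult y (hh r s)) i i" by (simp add: xy)
    moreover have "madd (msmult x (idV r s)) (msmult y (hh r s)) i i = x + y * of_int (2*i - r - s)"
      using that by (simp add: madd_def msmult_def idV_def hh_def diag_def)
    moreover have "bracket r s X (delta r s) i i = z (i-1) - z i"
    proof -
      have a: "(if r < i \<and> i \<le> s then X i (i-1) else 0) = z (i-1)"
        using that gl_zero[OF Xgl, of i "i-1"] by (auto simp: z_def)
      have b: "(if r < i+1 \<and> i+1 \<le> s then X (i+1) i else 0) = z i"
        using that gl_zero[OF Xgl, of "i+1" i] by (auto simp: z_def)
      show ?thesis by (simp only: bracket_delta a b)
    qed
    ultimately show ?thesis by simp
  qed
  have zr: "z (r-1) = 0" using gl_zero[OF Xgl, of r "r-1"] by (simp add: z_def)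
  have ind: "j \<le> s \<longrightarrow> z j = y * of_int ((j-r+1)*(s-j)) - x * of_int (j - r + 1)" if "r - 1 \<le> j" for j
    using that
  proof (induction j rule: int_ge_induct)
    case base then show ?case using zr by simp
  next
    case (step i)
    show ?case
    proof
      assume a: "i + 1 \<le> s"
      then have "z i - z (i+1) = x + y * of_int (2*(i+1) - r - s)" using step.hyps stp[of "i+1"] by simp
      then have "z (i+1) = z i - x - y * of_int (2*(i+1) - r - s)" by (simp add: algebra_simps)
      also have "\<dots> = y * of_int ((i-r+1)*(s-i)) - x * of_int (i - r + 1) - x - y * of_int (2*(i+1) - r - s)"
        using step.IH a by simp
      also have "\<dots> = y * of_int ((i+1-r+1)*(s-(i+1))) - x * of_int (i + 1 - r + 1)"
        unfolding of_int_mult of_int_diff of_int_add by (simp add: algebra_simps)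
      finally show "z (i+1) = y * of_int ((i+1-r+1)*(s-(i+1))) - x * of_int (i + 1 - r + 1)" .
    qed
  qed
  have "z s = 0" using gl_zero[OF Xgl, of "s+1" s] by (simp add: z_def)
  then have "x * of_int (s - r + 1) = 0" using ind[of s] rs by simp
  moreover have "(of_int (s - r + 1) :: 'a) \<noteq> 0" using rs by (simp only: of_int_eq_0_iff)
  ultimately have x0: "x = 0" by simp
  have "X = msmult y (ee r s)"
  proof (rule ext, rule ext)
    fix i j
    show "X i j = msmult y (ee r s) i j"
    proof (cases "i = j + 1 \<and> r \<le> j \<and> j < s")
      case True
      then have "X i j = z j" by (simp add: z_def)
      also have "\<dots> = y * of_int ((j-r+1)*(s-j))" using ind[of j] True x0 by simp
      finally show ?thesis using True by (simp add: msmult_def ee_def)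
    next
      case False
      have "X i j = 0"
      proof (cases "i = j + 1")
        case True then show ?thesis using False gl_zero[OF Xgl, of i j] by auto
      next
        case F: False
        show ?thesis
        proof (rule ccontr)
          assume "X i j \<noteq> 0"
          then have "i - j = 1" using Xg unfolding gl_deg_def by blast
          then show False using F by simp
        qed
      qed
      then show ?thesis using False by (auto simp: msmult_def ee_def)
    qed
  qed
  then show ?thesis by blast
qed
lemma gl_deg_nz: "X \<in> gl_deg r s k \<Longrightarrow> X i j \<noteq> 0 \<Longrightarrow> i = j + k \<and> r \<le> j \<and> j \<le> s \<and> r \<le> i \<and> i \<le> s"
  unfolding gl_deg_def gl_def by force

lemma bracket_delta_sub:
  assumes Xg: "X \<in> gl_deg r s k" and k: "k \<ge> 1" and i: "r \<le> i" "i \<le> s"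
  shows "bracket r s X (delta r s) (i+k-1) i = X (i-1+k) (i-1) - X (i+k) i"
proof -
  have Xgl: "X \<in> gl r s" using Xg unfolding gl_deg_def by auto
  have a: "(if r < i \<and> i \<le> s then X (i+k-1) (i-1) else 0) = X (i-1+k) (i-1)"
    using i gl_zero[OF Xgl, of "i+k-1" "i-1"] by (auto simp: algebra_simps)
  have b: "(if r < i+k-1+1 \<and> i+k-1+1 \<le> s then X (i+k-1+1) i else 0) = X (i+k) i"
    using i k gl_zero[OF Xgl, of "i+k" i] by auto
  show ?thesis by (simp only: bracket_delta a b)
qed

lemma inj_delta:
  assumes Xg: "X \<in> gl_deg r s k" and k: "k \<ge> 1" and B: "bracket r s X (delta r s) = mzero"
  shows "X = mzero"
proof -
  have Xgl: "X \<in> gl r s" using Xg unfolding gl_deg_def by auto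
  define z where "z j = X (j+k) j" for j
  have stp: "z (i-1) = z i" if "r \<le> i" "i \<le> s" for i
    using bracket_delta_sub[OF Xg k that] B by (simp add: z_def mzero_def)
  have zr: "z (r-1) = 0" using gl_zero[OF Xgl, of "r-1+k" "r-1"] by (simp add: z_def)
  have ind: "j \<le> s \<longrightarrow> z j = 0" if "r - 1 \<le> j" for j
    using that
  proof (induction j rule: int_ge_induct)
    case base then show ?case using zr by simp
  next
    case (step i)
    then show ?case using stp[of "i+1"] by auto
  qed
  show ?thesis
  proof (rule ext, rule ext, rule ccontr)
    fix i j assume "X i j \<noteq> mzero i j"
    then have nz: "X i j \<noteq> 0" by (simp add: mzero_def)
    then have "i = j + k" "r \<le> j" "j \<le> s" using gl_deg_nz[OF Xg nz] by auto
    then have "X i j = z j" by (simp add: z_def)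
    with ind[of j] \<open>r \<le> j\<close> \<open>j \<le> s\<close> nz show False by simp
  qed
qed

lemma int_id2: "((i::int)+1-r+1)*(i+1-r+2)*(3*(s-r+1) - 2*(i+1-r+1) - 1)
   = (i-r+1)*(i-r+2)*(3*(s-r+1) - 2*(i-r+1) - 1) + 6*((i+1-r+1)*(s-(i+1)))"
  by (simp add: algebra_simps)

lemma C3:
  fixes X :: "'a::field_char_0 endo"
  assumes rs: "r < s" and X: "X \<in> prol_step r s (line (delta r s)) (Suc (Suc (Suc 0)))"
  shows "X = mzero"
proof -
  have Xg: "X \<in> gl_deg r s 2" and Xb: "bracket r s X (delta r s) \<in> prol_step r s (line (delta r s)) (Suc (Suc 0))"
    using X delta_line by auto
  have Xgl: "X \<in> gl r s" using Xg unfolding gl_deg_def by auto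
  obtain b where bb: "bracket r s X (delta r s) = msmult b (ee r s)"
    using C2[OF rs Xb] by blast
  define z where "z j = X (j+2) j" for j
  have stp: "z (i-1) - z i = b * of_int ((i-r+1)*(s-i))" if "r \<le> i" "i \<le> s" for i
  proof -
    have "bracket r s X (delta r s) (i+2-1) i = z (i-1) - z i"
      using bracket_delta_sub[OF Xg _ that] by (simp add: z_def)
    moreover have "bracket r s X (delta r s) (i+2-1) i = b * of_int ((i-r+1)*(s-i))"
      using that unfolding bb by (auto simp: msmult_def ee_def)
    ultimately show ?thesis by simp
  qed
  have zr: "z (r-1) = 0" using gl_zero[OF Xgl, of "r-1+2" "r-1"] by (simp add: z_def)
  have ind: "j \<le> s \<longrightarrow> 6 * z j = - b * of_int ((j-r+1)*(j-r+2)*(3*(s-r+1) - 2*(j-r+1) - 1))" if "r - 1 \<le> j" for j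
    using that
  proof (induction j rule: int_ge_induct)
    case base then show ?case using zr by simp
  next
    case (step i)
    show ?case
    proof
      assume a: "i + 1 \<le> s"
      define w where "w = b * of_int ((i+1-r+1)*(s-(i+1)))"
      have "z i - z (i+1) = w" using a step.hyps stp[of "i+1"] by (simp add: w_def)
      then have "6 * z (i+1) = 6 * z i - 6 * w" by (simp add: algebra_simps)
      also have "\<dots> = 6 * z i - 6 * b * of_int ((i+1-r+1)*(s-(i+1)))" by (simp add: w_def)
      also have "\<dots> = - b * (of_int ((i-r+1)*(i-r+2)*(3*(s-r+1) - 2*(i-r+1) - 1)) + 6 * of_int ((i+1-r+1)*(s-(i+1))))"
        using step.IH a by (simp add: algebra_simps)
      also have "\<dots> = - b * of_int ((i+1-r+1)*(i+1-r+2)*(3*(s-r+1) - 2*(i+1-r+1) - 1))"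
        unfolding int_id2 by simp
      finally show "6 * z (i+1) = - b * of_int ((i+1-r+1)*(i+1-r+2)*(3*(s-r+1) - 2*(i+1-r+1) - 1))" .
    qed
  qed
  have "z s = 0" using gl_zero[OF Xgl, of "s+2" s] by (simp add: z_def)
  then have e: "b * of_int ((s-r+1)*(s-r+2)*(3*(s-r+1) - 2*(s-r+1) - 1)) = (0::'a)" using ind[of s] rs by simp
  have "(s-r+1)*(s-r+2)*(3*(s-r+1) - 2*(s-r+1) - 1) > 0" using rs by (simp add: mult_pos_pos)
  then have "(of_int ((s-r+1)*(s-r+2)*(3*(s-r+1) - 2*(s-r+1) - 1)) :: 'a) \<noteq> 0"
    by (simp only: of_int_eq_0_iff)
  with e have "b = 0" by simp
  then have "bracket r s X (delta r s) = mzero" using bb by (simp add: msmult_def mzero_def fun_eq_iff)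
  then show ?thesis using inj_delta[OF Xg] by simp
qed

lemma C4:
  fixes X :: "'a::field_char_0 endo"
  assumes rs: "r < s" and n: "n \<ge> 2" and X: "X \<in> prol_step r s (line (delta r s)) (Suc n)"
  shows "X = mzero"
  using n X
proof (induction n arbitrary: X rule: dec_induct)
  case base
  then show ?case using C3[OF rs] by (simp add: numeral_2_eq_2)
next
  case (step m)
  have Xg: "X \<in> gl_deg r s (int (Suc m))" and Xb: "bracket r s X (delta r s) \<in> prol_step r s (line (delta r s)) (Suc m)"
    using step.prems delta_line by auto
  have "bracket r s X (delta r s) = mzero" using step.IH[OF Xb] .
  then show ?case using inj_delta[OF Xg] by simp
qed




lemma lin_gl: "lin r s x y b c \<in> gl r s"
  by (auto simp: gl_def lin_def madd_def msmult_def idV_def hh_def diag_def ee_def delta_def split: if_splits)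

lemma deg_part_lin: "deg_part k (lin r s x y b c) =
  (if k = -1 then msmult c (delta r s) else if k = 0 then madd (msmult x (idV r s)) (msmult y (hh r s))
   else if k = 1 then msmult b (ee r s) else mzero)"
  by (auto simp: fun_eq_iff deg_part_def lin_def madd_def msmult_def idV_def hh_def diag_def ee_def delta_def mzero_def)

lemma prol_deg_m1: "prol_deg r s m (-1) = m" by (simp add: prol_deg_def)
lemma prol_deg_0: "prol_deg r s m 0 = prol_step r s m (Suc 0)" by (simp add: prol_deg_def)
lemma prol_deg_1: "prol_deg r s m 1 = prol_step r s m (Suc (Suc 0))"
  by (simp add: prol_deg_def numeral_2_eq_2)
lemma prol_deg_ge2: "k \<ge> 2 \<Longrightarrow> prol_deg r s m k = prol_step r s m (Suc (nat k))"
  by (simp add: prol_deg_def Suc_nat_eq_nat_zadd1 add.commute)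
lemma prol_deg_lt: "k < -1 \<Longrightarrow> prol_deg r s m k = {mzero}" by (simp add: prol_deg_def)

lemma P1: "madd (msmult x (idV r s)) (msmult y (hh r s)) \<in> prol_step r s (line (delta r s)) (Suc 0)"
proof -
  have g: "madd (msmult x (idV r s)) (msmult y (hh r s)) \<in> gl_deg r s 0"
    by (auto simp: gl_deg_def gl_def madd_def msmult_def idV_def hh_def diag_def split: if_splits)
  have "bracket r s (madd (msmult x (idV r s)) (msmult y (hh r s))) d \<in> line (delta r s)"
    if dl: "d \<in> line (delta r s)" for d
  proof -
    obtain c where d: "d = msmult c (delta r s)" using dl unfolding line_def by auto
    have "bracket r s (madd (msmult x (idV r s)) (msmult y (hh r s))) d = msmult (-2*y*c) (delta r s)"
      unfolding d bracket_madd_left bracket_smult_left bracket_smult_right bracket_id[OF delta_gl] bracket_hh_delta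
      by (simp add: fun_eq_iff madd_def msmult_def mzero_def)
    then show ?thesis unfolding line_def by auto
  qed
  then show ?thesis using g by simp
qed

lemma P2:
  assumes "r < s"
  shows "msmult b (ee r s) \<in> prol_step r s (line (delta r s)) (Suc (Suc 0))"
proof -
  have g: "msmult b (ee r s) \<in> gl_deg r s 1"
    by (auto simp: gl_deg_def gl_def msmult_def ee_def split: if_splits)
  have "bracket r s (msmult b (ee r s)) d \<in> prol_step r s (line (delta r s)) (Suc 0)"
    if dl: "d \<in> line (delta r s)" for d
  proof -
    obtain c where d: "d = msmult c (delta r s)" using dl unfolding line_def by auto
    have "bracket r s (msmult b (ee r s)) d = madd (msmult 0 (idV r s)) (msmult (b*c) (hh r s))"
      unfolding d bracket_smult_left bracket_smult_right bracket_ee_delta[OF assms]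
      by (simp add: fun_eq_iff madd_def msmult_def)
    then show ?thesis using P1 by simp
  qed
  then show ?thesis using g by simp
qed

lemma lin_in_L:
  fixes x :: "'a::field_char_0"
  assumes "r < s"
  shows "lin r s x y b c \<in> prolongation r s (line (delta r s))"
  unfolding prolongation_def
proof (intro CollectI conjI allI)
  show "lin r s x y b c \<in> gl r s" by (rule lin_gl)
  fix k :: int
  consider "k < -1" | "k = -1" | "k = 0" | "k = 1" | "k \<ge> 2" by linarith
  then show "deg_part k (lin r s x y b c) \<in> prol_deg r s (line (delta r s)) k"
  proof cases
    case 1 then show ?thesis by (simp add: deg_part_lin prol_deg_lt)
  next
    case 2 then show ?thesis by (auto simp: deg_part_lin prol_deg_m1 line_def)
  next
    case 3 then show ?thesis by (simp add: deg_part_lin prol_deg_0 P1 del: prol_step.simps)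
  next
    case 4 then show ?thesis by (simp add: deg_part_lin prol_deg_1 P2[OF assms] del: prol_step.simps)
  next
    case 5 then show ?thesis by (simp add: deg_part_lin prol_deg_ge2 mzero_prol del: prol_step.simps)
  qed
qed

lemma L_cases:
  fixes A :: "'a::field_char_0 endo"
  assumes rs: "r < s" and A: "A \<in> prolongation r s (line (delta r s))"
  shows "\<exists>x y b c. A = lin r s x y b c"
proof -
  have D: "deg_part k A \<in> prol_deg r s (line (delta r s)) k" for k using A unfolding prolongation_def by auto
  obtain c where c: "deg_part (-1) A = msmult c (delta r s)"
    using D[of "-1"] unfolding prol_deg_m1 line_def by auto
  obtain x y where xy: "deg_part 0 A = madd (msmult x (idV r s)) (msmult y (hh r s))"
    using C1[OF D[of 0, unfolded prol_deg_0]] by blast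
  obtain b where b: "deg_part 1 A = msmult b (ee r s)"
    using C2[OF rs D[of 1, unfolded prol_deg_1]] by blast
  have hi: "deg_part k A = mzero" if "k \<ge> 2" for k
    using C4[OF rs _ D[of k, unfolded prol_deg_ge2[OF that]]] that by simp
  have lo: "deg_part k A = mzero" if "k < -1" for k
    using D[of k] unfolding prol_deg_lt[OF that] by simp
  have all: "deg_part k A = deg_part k (lin r s x y b c)" for k
  proof -
    consider "k < -1" | "k = -1" | "k = 0" | "k = 1" | "k \<ge> 2" by linarith
    then show ?thesis
      by cases (simp_all add: deg_part_lin c xy b hi lo)
  qed
  have "A = lin r s x y b c"
  proof (rule ext, rule ext)
    fix i j
    have "A i j = deg_part (i-j) A i j" by (simp add: deg_part_def)
    also have "\<dots> = deg_part (i-j) (lin r s x y b c) i j" by (simp add: all)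
    also have "\<dots> = lin r s x y b c i j" by (simp add: deg_part_def)
    finally show "A i j = lin r s x y b c i j" .
  qed
  then show ?thesis by blast
qed



lemma lin_id: "lin r s x 0 0 0 = msmult x (idV r s)"
  by (simp add: lin_def fun_eq_iff madd_def msmult_def)
lemma lin_delta: "lin r s 0 0 0 1 = delta r s"
  by (simp add: lin_def fun_eq_iff madd_def msmult_def)

lemma nonneg_c:
  assumes rs: "r < s" and h: "lin r s x y b c \<in> prolongation_nonneg r s (line (delta r s))"
  shows "c = 0"
proof -
  have "deg_part (-1) (lin r s x y b c) r (r+1) = mzero r (r+1)"
    using h unfolding prolongation_nonneg_def by simp
  then have "lin r s x y b c r (r+1) = 0" by (simp add: deg_part_def mzero_def)
  then show ?thesis using lin_entries(4)[OF rs, of x y b c] by simp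
qed

theorem mainTheorem12:
  fixes r s :: int
  assumes "r < s" and "s < 0"
  shows "(\<exists>\<phi> :: 'a::field_char_0 endo \<Rightarrow> 'a^2^2.
            lie_iso_gl2 r s (prolongation r s (line (delta r s))) \<phi>)
       \<and> is_lie_ideal r s (prolongation r s (line (delta r s))) (line (idV r s :: 'a endo))
       \<and> line (idV r s :: 'a endo) \<subseteq> prolongation_nonneg r s (line (delta r s))
       \<and> (\<forall>I :: 'a endo set. is_lie_ideal r s (prolongation r s (line (delta r s))) I
              \<and> I \<subseteq> prolongation_nonneg r s (line (delta r s))
              \<longrightarrow> I \<subseteq> line (idV r s))"
proof (intro conjI)
  note rs = assms(1)
  define L where "L = (prolongation r s (line (delta r s)) :: 'a endo set)"
  have Lc: "\<And>A. A \<in> L \<Longrightarrow> \<exists>x y b c. A = lin r s x y b c" unfolding L_def using L_cases[OF rs] by blast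
  have Ll: "\<And>x y b c. lin r s x y b c \<in> L" unfolding L_def using lin_in_L[OF rs] by blast
  have "lie_iso_gl2 r s L (phi r s)"
    unfolding lie_iso_gl2_def
  proof (intro conjI ballI allI)
    show "bij_betw (phi r s) L UNIV"
      unfolding bij_betw_def
    proof
      show "inj_on (phi r s) L"
      proof (rule inj_onI)
        fix A B assume A: "A \<in> L" and B: "B \<in> L" and e: "phi r s A = phi r s B"
        obtain x y b c where a: "A = lin r s x y b c" using Lc[OF A] by blast
        obtain x' y' b' c' where b: "B = lin r s x' y' b' c'" using Lc[OF B] by blast
        show "A = B" using e unfolding a b phi_lin[OF rs] mat4_eq_iff by simp
      qed
      show "phi r s ` L = UNIV"
      proof (rule set_eqI, rule iffI)
        fix M :: "'a^2^2"
        have "M = phi r s (lin r s ((M$1$1 + M$2$2)/2) ((M$1$1 - M$2$2)/2) (M$1$2) (M$2$1))"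
          unfolding phi_lin[OF rs] by (rule mat4_surj)
        then show "M \<in> phi r s ` L" using Ll by blast
      qed simp
    qed
  next
    fix A B assume "A \<in> L" "B \<in> L"
    show "phi r s (madd A B) = phi r s A + phi r s B" by (rule phi_madd)
  next
    fix c A assume "A \<in> L"
    show "phi r s (msmult c A) = (\<chi> i j. c * phi r s A $ i $ j)" by (rule phi_msmult)
  next
    fix A B assume A: "A \<in> L" and B: "B \<in> L"
    obtain x y b c where a: "A = lin r s x y b c" using Lc[OF A] by blast
    obtain x' y' b' c' where b: "B = lin r s x' y' b' c'" using Lc[OF B] by blast
    show "phi r s (bracket r s A B) = bracket2 (phi r s A) (phi r s B)"
      unfolding a b bracket_lin[OF rs] phi_lin[OF rs] bracket2_mat4 ..
  qed
  then show "\<exists>\<phi> :: 'a::field_char_0 endo \<Rightarrow> 'a^2^2.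
            lie_iso_gl2 r s (prolongation r s (line (delta r s))) \<phi>" unfolding L_def by blast
  have lineL: "line (idV r s) \<subseteq> L"
  proof
    fix X assume "X \<in> line (idV r s :: 'a endo)"
    then obtain a where "X = msmult a (idV r s)" unfolding line_def by auto
    then show "X \<in> L" using Ll[of a 0 0 0] by (simp add: lin_id)
  qed
  show "is_lie_ideal r s (prolongation r s (line (delta r s))) (line (idV r s :: 'a endo))"
    unfolding L_def[symmetric] is_lie_ideal_def
  proof (intro conjI ballI)
    show "is_subspace (line (idV r s :: 'a endo))"
      unfolding is_subspace_def
    proof (intro conjI ballI allI)
      show "mzero \<in> line (idV r s :: 'a endo)" unfolding line_def
        by (rule CollectI, rule exI[of _ 0]) (simp add: mzero_def msmult_def fun_eq_iff)
    next
      fix A B assume "A \<in> line (idV r s :: 'a endo)" "B \<in> line (idV r s :: 'a endo)"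
      then obtain a b where "A = msmult a (idV r s)" "B = msmult b (idV r s)" unfolding line_def by auto
      then show "madd A B \<in> line (idV r s)" unfolding line_def
        by (intro CollectI exI[of _ "a+b"]) (simp add: madd_def msmult_def fun_eq_iff algebra_simps)
    next
      fix c A assume "A \<in> line (idV r s :: 'a endo)"
      then obtain a where "A = msmult a (idV r s)" unfolding line_def by auto
      then show "msmult c A \<in> line (idV r s)" unfolding line_def
        by (intro CollectI exI[of _ "c*a"]) (simp add: msmult_def fun_eq_iff)
    qed
    show "line (idV r s) \<subseteq> L" by (rule lineL)
  next
    fix A X assume A: "A \<in> L" and X: "X \<in> line (idV r s :: 'a endo)"
    then obtain a where xa: "X = msmult a (idV r s)" unfolding line_def by auto
    obtain x y b c where "A = lin r s x y b c" using Lc[OF A] by blast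
    then have Agl: "A \<in> gl r s" using lin_gl by simp
    then have "bracket r s A X = msmult 0 (idV r s)"
      unfolding xa bracket_smult_right bracket_X_id[OF Agl] by (simp add: msmult_def mzero_def fun_eq_iff)
    then show "bracket r s A X \<in> line (idV r s)" unfolding line_def by blast
  qed
  show "line (idV r s :: 'a endo) \<subseteq> prolongation_nonneg r s (line (delta r s))"
  proof
    fix X assume X: "X \<in> line (idV r s :: 'a endo)"
    then obtain a where xa: "X = msmult a (idV r s)" unfolding line_def by auto
    have "deg_part (-1) X = mzero" unfolding xa by (simp add: deg_part_def msmult_def idV_def mzero_def fun_eq_iff)
    then show "X \<in> prolongation_nonneg r s (line (delta r s))"
      using lineL X unfolding prolongation_nonneg_def L_def by auto
  qed
  show "\<forall>I :: 'a endo set. is_lie_ideal r s (prolongation r s (line (delta r s))) I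
              \<and> I \<subseteq> prolongation_nonneg r s (line (delta r s))
              \<longrightarrow> I \<subseteq> line (idV r s)"
  proof (intro allI impI subsetI)
    fix I :: "'a endo set" and X
    assume H: "is_lie_ideal r s (prolongation r s (line (delta r s))) I \<and> I \<subseteq> prolongation_nonneg r s (line (delta r s))"
      and X: "X \<in> I"
    have IL: "I \<subseteq> L" and brI: "\<And>A Y. A \<in> L \<Longrightarrow> Y \<in> I \<Longrightarrow> bracket r s A Y \<in> I"
      and Inn: "I \<subseteq> prolongation_nonneg r s (line (delta r s))"
      using H unfolding is_lie_ideal_def L_def by auto
    have dL: "delta r s \<in> L" using Ll[of 0 0 0 1] by (simp add: lin_delta)
    obtain x y b c where xe: "X = lin r s x y b c" using Lc X IL by blast
    have c0: "c = 0" using nonneg_c[OF rs] Inn X xe by blast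
    have X1: "lin r s 0 (-b) 0 (2*y) \<in> I"
      using brI[OF dL X] unfolding xe c0 lin_delta[symmetric] bracket_lin[OF rs] by simp
    have y0: "y = 0" using nonneg_c[OF rs] Inn X1 by fastforce
    have X2: "lin r s 0 0 0 (-2*b) \<in> I"
      using brI[OF dL X1] unfolding lin_delta[symmetric] bracket_lin[OF rs] by simp
    have b0: "b = 0" using nonneg_c[OF rs] Inn X2 by fastforce
    have "X = msmult x (idV r s)" unfolding xe c0 y0 b0 lin_id ..
    then show "X \<in> line (idV r s)" unfolding line_def by blast
  qed
qed


end
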